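(* For every $n\ge2$, $$\sum_{k=1}^{n-2}k^2\,f_{k,n}=\frac13(4n+1)(2n-3)!!-\frac32(2n-2)!!.$$
   Context: $\mathcal{T}_n$ is the set of fully resolved (binary) rooted trees with leaves bijectively labeled by $\{1,\dots,n\}$, and $f_{k,n}=|\{T\in\mathcal{T}_n:\varphi_T(1,2)=k\}|$, where $\varphi_T(1,2)$ is the depth (number of arcs from the root) of the lowest common ancestor of leaves $1$ and $2$. Double factorials: $(2m-1)!!=(2m-1)(2m-3)\cdots1$, $(2m)!!=(2m)(2m-2)\cdots2$, $0!!=1$; an empty sum is $0$. *)

theory Defs
  imports Complex_Main
begin

datatype ltree = Leaf nat | Node ltree ltree

fun leaves :: "ltree \<Rightarrow> nat list" where
  "leaves (Leaf x) = [x]"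
| "leaves (Node l r) = leaves l @ leaves r"

definition labelled :: "nat \<Rightarrow> ltree \<Rightarrow> bool" where
  "labelled n t \<longleftrightarrow> distinct (leaves t) \<and> set (leaves t) = {1..n}"

text \<open>Isomorphism of rooted (unordered) trees: children may be swapped at any node.\<close>
inductive tiso :: "ltree \<Rightarrow> ltree \<Rightarrow> bool" where
  leaf: "tiso (Leaf x) (Leaf x)"
| same: "tiso l l' \<Longrightarrow> tiso r r' \<Longrightarrow> tiso (Node l r) (Node l' r')"
| swap: "tiso l l' \<Longrightarrow> tiso r r' \<Longrightarrow> tiso (Node l r) (Node r' l')"

text \<open>The set T_n of fully resolved rooted trees with leaves labelled by {1..n}:
  isomorphism classes of labelled plane binary trees.\<close>
definition Tn :: "nat \<Rightarrow> ltree set set" where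
  "Tn n = {t. labelled n t} // {(s, t). tiso s t}"

text \<open>Depth (number of arcs from the root) of the lowest common ancestor of leaves a and b.\<close>
fun lca_depth :: "nat \<Rightarrow> nat \<Rightarrow> ltree \<Rightarrow> nat" where
  "lca_depth a b (Leaf x) = 0"
| "lca_depth a b (Node l r) =
     (if a \<in> set (leaves l) \<and> b \<in> set (leaves l) then Suc (lca_depth a b l)
      else if a \<in> set (leaves r) \<and> b \<in> set (leaves r) then Suc (lca_depth a b r)
      else 0)"

definition f :: "nat \<Rightarrow> nat \<Rightarrow> nat" where
  "f k n = card {T \<in> Tn n. \<exists>t\<in>T. lca_depth 1 2 t = k}"

fun dfact :: "nat \<Rightarrow> nat" where
  "dfact 0 = 1"
| "dfact (Suc 0) = 1"
| "dfact (Suc (Suc m)) = Suc (Suc m) * dfact m"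

end

theory Submission
  imports Defs "HOL-Library.Multiset"
begin


fun ins :: "nat \<Rightarrow> ltree \<Rightarrow> ltree list" where
  "ins x (Leaf y) = [Node (Leaf x) (Leaf y), Node (Leaf y) (Leaf x)]"
| "ins x (Node l r) = [Node (Leaf x) (Node l r), Node (Node l r) (Leaf x)]
     @ map (\<lambda>l'. Node l' r) (ins x l) @ map (\<lambda>r'. Node l r') (ins x r)"

fun del :: "nat \<Rightarrow> ltree \<Rightarrow> ltree" where
  "del x (Leaf y) = Leaf y"
| "del x (Node l r) = (if l = Leaf x then r else if r = Leaf x then l
     else if x \<in> set (leaves l) then Node (del x l) r else Node l (del x r))"

lemma leaves_ne: "leaves t \<noteq> []"
  by (induction t) auto

lemma ins_node: "t' \<in> set (ins x t) \<Longrightarrow> \<exists>a b. t' = Node a b"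
  by (induction t) auto

lemma ins_mset: "t' \<in> set (ins x t) \<Longrightarrow> mset (leaves t') = add_mset x (mset (leaves t))"
  by (induction t arbitrary: t') auto

lemma ins_set: "t' \<in> set (ins x t) \<Longrightarrow> set (leaves t') = insert x (set (leaves t))"
  by (metis ins_mset set_mset_add_mset_insert set_mset_mset)

lemma ins_length: "length (ins x t) = 4 * length (leaves t) - 2"
proof (induction t)
  case (Leaf y) then show ?case by simp
next
  case (Node l r)
  have "length (leaves l) \<ge> 1" "length (leaves r) \<ge> 1" using leaves_ne
    by (metis One_nat_def Suc_leI length_greater_0_conv)+
  then show ?case using Node by simp
qed

lemma del_ins: "t \<in> set (ins x (del x t))" if "x \<in> set (leaves t)" "t \<noteq> Leaf x"
  using that
proof (induction t)
  case (Leaf y) then show ?case by simp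
next
  case (Node l r)
  show ?case
  proof (cases "l = Leaf x")
    case True then show ?thesis by (cases r) auto
  next
    case l: False
    show ?thesis
    proof (cases "r = Leaf x")
      case True then show ?thesis using l by (cases l) auto
    next
      case r: False
      show ?thesis
      proof (cases "x \<in> set (leaves l)")
        case True
        then have "l \<in> set (ins x (del x l))" using Node l by auto
        then show ?thesis using l r True by (cases "del x l") auto
      next
        case False
        then have "x \<in> set (leaves r)" using Node.prems by auto
        then have "r \<in> set (ins x (del x r))" using Node r by auto
        then show ?thesis using l r False by (cases "del x r") auto
      qed
    qed
  qed
qed

lemma ins_del: "x \<notin> set (leaves t) \<Longrightarrow> t' \<in> set (ins x t) \<Longrightarrow> del x t' = t"
proof (induction t arbitrary: t')
  case (Leaf y) then show ?case by auto
next
  case (Node l r)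
  from Node.prems(2) consider "t' = Node (Leaf x) (Node l r)" | "t' = Node (Node l r) (Leaf x)"
    | l' where "l' \<in> set (ins x l)" "t' = Node l' r"
    | r' where "r' \<in> set (ins x r)" "t' = Node l r'" by auto
  then show ?case
  proof cases
    case 3
    then have "l' \<noteq> Leaf x" "x \<in> set (leaves l')" using ins_node ins_set by blast+
    moreover have "r \<noteq> Leaf x" using Node.prems by auto
    ultimately show ?thesis using 3 Node by auto
  next
    case 4
    then have "r' \<noteq> Leaf x" using ins_node by blast
    moreover have "l \<noteq> Leaf x" "x \<notin> set (leaves l)" using Node.prems by auto
    ultimately show ?thesis using 4 Node by auto
  qed auto
qed

lemma ins_distinct: "x \<notin> set (leaves t) \<Longrightarrow> distinct (ins x t)"
proof (induction t)
  case (Leaf y) then show ?case by auto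
next
  case (Node l r)
  have i1: "inj (\<lambda>l'. Node l' r)" "inj (\<lambda>r'. Node l r')" by (auto intro: injI)
  have a: "Node (Leaf x) (Node l r) \<notin> (\<lambda>l'. Node l' r) ` set (ins x l)"
    by (auto dest: ins_node)
  have b: "Node (Leaf x) (Node l r) \<notin> (\<lambda>r'. Node l r') ` set (ins x r)"
    using Node.prems by auto
  have c: "Node (Node l r) (Leaf x) \<notin> (\<lambda>l'. Node l' r) ` set (ins x l)"
    using Node.prems by auto
  have d: "Node (Node l r) (Leaf x) \<notin> (\<lambda>r'. Node l r') ` set (ins x r)"
    by (auto dest: ins_node)
  have e: "(\<lambda>l'. Node l' r) ` set (ins x l) \<inter> (\<lambda>r'. Node l r') ` set (ins x r) = {}"
    using Node.prems by (auto dest!: ins_set)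
  have dl: "distinct (ins x l)" "distinct (ins x r)" using Node by auto
  have f: "Node (Leaf x) (Node l r) \<noteq> Node (Node l r) (Leaf x)" by auto
  show ?case
    apply (simp only: ins.simps distinct_append distinct_map set_append set_map)
    using i1 a b c d e dl f by (auto simp: inj_on_def)
qed



lemma tiso_refl: "tiso t t"
  by (induction t) (auto intro: tiso.intros)

lemma tiso_sym: "tiso s t \<Longrightarrow> tiso t s"
  by (induction rule: tiso.induct) (auto intro: tiso.intros)

lemma tiso_trans: "tiso a b \<Longrightarrow> tiso b c \<Longrightarrow> tiso a c"
proof (induction a b arbitrary: c rule: tiso.induct)
  case (leaf x) then show ?case by simp
next
  case (same l l' r r')
  from same.prems show ?case
    by (cases rule: tiso.cases) (auto intro: tiso.intros same.IH)
next
  case (swap l l' r r')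
  from swap.prems show ?case
    by (cases rule: tiso.cases) (auto intro: tiso.intros swap.IH)
qed

lemma tiso_mset: "tiso s t \<Longrightarrow> mset (leaves s) = mset (leaves t)"
  by (induction rule: tiso.induct) auto

lemma tiso_set: "tiso s t \<Longrightarrow> set (leaves s) = set (leaves t)"
  by (metis tiso_mset set_mset_mset)

lemma depth_zero: "\<not> (a \<in> set (leaves t) \<and> b \<in> set (leaves t)) \<Longrightarrow> lca_depth a b t = 0"
  by (cases t) auto

lemma tiso_depth: "tiso s t \<Longrightarrow> distinct (leaves s) \<Longrightarrow> lca_depth a b s = lca_depth a b t"
proof (induction rule: tiso.induct)
  case (leaf x) then show ?case by simp
next
  case (same l l' r r')
  then show ?case using tiso_set[OF same.hyps(1)] tiso_set[OF same.hyps(2)] by auto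
next
  case (swap l l' r r')
  have dj: "set (leaves l) \<inter> set (leaves r) = {}" using swap.prems by auto
  then show ?case using swap tiso_set[OF swap.hyps(1)] tiso_set[OF swap.hyps(2)] by auto
qed

lemma card_class: "distinct (leaves t) \<Longrightarrow> card {s. tiso t s} = 2 ^ (length (leaves t) - 1)"
proof (induction t)
  case (Leaf x)
  have "tiso (Leaf x) s \<longleftrightarrow> s = Leaf x" for s
  proof
    assume "tiso (Leaf x) s" then show "s = Leaf x" by (cases rule: tiso.cases) auto
  qed (auto intro: tiso.intros)
  then have "{s. tiso (Leaf x) s} = {Leaf x}" by auto
  then show ?case by simp
next
  case (Node l r)
  let ?A = "{s. tiso l s}" and ?B = "{s. tiso r s}"
  have cA: "card ?A = 2 ^ (length (leaves l) - 1)" and cB: "card ?B = 2 ^ (length (leaves r) - 1)"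
    using Node.IH Node.prems by simp_all
  have fA: "finite ?A" using cA by (metis card.infinite power_not_zero zero_neq_numeral)
  have fB: "finite ?B" using cB by (metis card.infinite power_not_zero zero_neq_numeral)
  have eq: "{s. tiso (Node l r) s} = (\<lambda>(a,b). Node a b) ` (?A \<times> ?B) \<union> (\<lambda>(a,b). Node b a) ` (?A \<times> ?B)"
  proof (intro equalityI subsetI)
    fix s assume "s \<in> {s. tiso (Node l r) s}"
    then have "tiso (Node l r) s" by simp
    then show "s \<in> (\<lambda>(a,b). Node a b) ` (?A \<times> ?B) \<union> (\<lambda>(a,b). Node b a) ` (?A \<times> ?B)"
      by (cases rule: tiso.cases) auto
  next
    fix s assume "s \<in> (\<lambda>(a,b). Node a b) ` (?A \<times> ?B) \<union> (\<lambda>(a,b). Node b a) ` (?A \<times> ?B)"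
    then consider (1) a b where "s = Node a b" "tiso l a" "tiso r b"
      | (2) a b where "s = Node b a" "tiso l a" "tiso r b" by auto
    then show "s \<in> {s. tiso (Node l r) s}"
    proof cases
      case 1 then show ?thesis by (simp add: tiso.same)
    next
      case 2 then show ?thesis by (simp add: tiso.swap)
    qed
  qed
  have dj: "set (leaves l) \<inter> set (leaves r) = {}" using Node.prems by auto
  have disj: "(\<lambda>(a,b). Node a b) ` (?A \<times> ?B) \<inter> (\<lambda>(a,b). Node b a) ` (?A \<times> ?B) = {}"
  proof (rule ccontr)
    assume "\<not> ?thesis"
    then obtain a b a' b' where h: "tiso l a" "tiso r b" "tiso l a'" "tiso r b'" "Node a b = Node b' a'"
      by auto
    then have "a = b'" by simp
    then have "set (leaves l) = set (leaves r)" using tiso_set[OF h(1)] tiso_set[OF h(4)] by simp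
    then have "set (leaves l) = {}" using dj by simp
    then show False using leaves_ne[of l] by simp
  qed
  have inj1: "inj_on (\<lambda>(a,b). Node a b) (?A \<times> ?B)" by (auto simp: inj_on_def)
  have inj2: "inj_on (\<lambda>(a,b). Node b a) (?A \<times> ?B)" by (auto simp: inj_on_def)
  have fAB: "finite (?A \<times> ?B)" using fA fB by simp
  have c1: "card ((\<lambda>(a,b). Node a b) ` (?A \<times> ?B)) = card (?A \<times> ?B)" by (rule card_image[OF inj1])
  have c2: "card ((\<lambda>(a,b). Node b a) ` (?A \<times> ?B)) = card (?A \<times> ?B)" by (rule card_image[OF inj2])
  have "card {s. tiso (Node l r) s} = card ((\<lambda>(a,b). Node a b) ` (?A \<times> ?B)) + card ((\<lambda>(a,b). Node b a) ` (?A \<times> ?B))"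
    unfolding eq by (rule card_Un_disjoint[OF finite_imageI[OF fAB] finite_imageI[OF fAB] disj])
  also have "\<dots> = 2 * (card ?A * card ?B)" unfolding c1 c2 card_cartesian_product by simp
  also have "\<dots> = 2 ^ (length (leaves (Node l r)) - 1)"
  proof -
    obtain a' where a: "length (leaves l) = Suc a'" using leaves_ne[of l] by (cases "leaves l") auto
    obtain b' where b: "length (leaves r) = Suc b'" using leaves_ne[of r] by (cases "leaves r") auto
    show ?thesis using a b cA cB by (simp add: power_add)
  qed
  finally show ?case .
qed

lemma labelled_mset: "labelled n t \<longleftrightarrow> mset (leaves t) = mset_set {1..n}"
proof
  assume "labelled n t" then show "mset (leaves t) = mset_set {1..n}"
    unfolding labelled_def by (metis mset_set_set)
next
  assume h: "mset (leaves t) = mset_set {1..n}"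
  then have s: "set (leaves t) = {1..n}" by (metis finite_atLeastAtMost finite_set_mset_mset_set set_mset_mset)
  have "distinct (leaves t)" unfolding distinct_count_atmost_1 h s by simp
  then show "labelled n t" using s unfolding labelled_def by simp
qed

lemma tiso_labelled: "tiso s t \<Longrightarrow> labelled n s \<Longrightarrow> labelled n t"
  using tiso_mset labelled_mset by metis

lemma depth_bound: "distinct (leaves t) \<Longrightarrow> a \<noteq> b \<Longrightarrow> a \<in> set (leaves t) \<Longrightarrow> b \<in> set (leaves t)
   \<Longrightarrow> lca_depth a b t + 2 \<le> length (leaves t)"
proof (induction t)
  case (Leaf x) then show ?case by simp
next
  case (Node l r)
  have "length (leaves l) \<ge> 1" "length (leaves r) \<ge> 1" using leaves_ne
    by (metis One_nat_def Suc_leI length_greater_0_conv)+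
  then show ?case using Node by auto
qed



abbreviation D :: "ltree \<Rightarrow> nat" where "D \<equiv> lca_depth 1 2"

lemma len_pos: "length (leaves t) \<ge> 1"
  using leaves_ne by (metis One_nat_def Suc_leI length_greater_0_conv)

lemma ins_length_real: "real (length (ins x t)) = 4 * real (length (leaves t)) - 2"
  using len_pos[of t] by (simp add: ins_length of_nat_diff)

lemma sum_const_ins:
  assumes "\<And>t'. t' \<in> set (ins x t) \<Longrightarrow> h t' = c"
  shows "(\<Sum>t'\<leftarrow>ins x t. h t') = (4 * real (length (leaves t)) - 2) * (c::real)"
proof -
  have "(\<Sum>t'\<leftarrow>ins x t. h t') = (\<Sum>t'\<leftarrow>ins x t. c)"
    using assms by (metis (mono_tags, lifting) map_eq_conv)
  also have "\<dots> = real (length (ins x t)) * c" by (simp add: sum_list_triv)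
  finally show ?thesis using ins_length_real by simp
qed

lemma tree_sum:
  fixes g :: "nat \<Rightarrow> real"
  assumes "distinct (leaves t)" "1 \<in> set (leaves t)" "2 \<in> set (leaves t)" "x \<notin> set (leaves t)"
  shows "(\<Sum>t'\<leftarrow>ins x t. g (D t')) = (4 * real (length (leaves t)) - 4 - 2 * real (D t)) * g (D t)
           + 2 * (real (D t) + 1) * g (Suc (D t))"
  using assms
proof (induction t arbitrary: g)
  case (Leaf y) then show ?case by simp
next
  case (Node l r)
  have x1: "x \<noteq> 1" "x \<noteq> 2" using Node.prems by auto
  have dj: "set (leaves l) \<inter> set (leaves r) = {}" "distinct (leaves l)" "distinct (leaves r)"
    using Node.prems(1) by auto
  have xl: "x \<notin> set (leaves l)" "x \<notin> set (leaves r)" using Node.prems(4) by auto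
  have top: "D (Node (Leaf x) (Node l r)) = Suc (D (Node l r))" "D (Node (Node l r) (Leaf x)) = Suc (D (Node l r))"
    using Node.prems x1 by auto
  have split: "(\<Sum>t'\<leftarrow>ins x (Node l r). g (D t')) = g (Suc (D (Node l r))) + g (Suc (D (Node l r)))
      + (\<Sum>l'\<leftarrow>ins x l. g (D (Node l' r))) + (\<Sum>r'\<leftarrow>ins x r. g (D (Node l r')))"
    using top by (simp add: o_def)
  have ll: "length (leaves (Node l r)) = length (leaves l) + length (leaves r)" by simp
  consider (L) "1 \<in> set (leaves l)" "2 \<in> set (leaves l)" | (R) "1 \<in> set (leaves r)" "2 \<in> set (leaves r)"
    | (N) "\<not> (1 \<in> set (leaves l) \<and> 2 \<in> set (leaves l))" "\<not> (1 \<in> set (leaves r) \<and> 2 \<in> set (leaves r))"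
    by blast
  then show ?case
  proof cases
    case L
    have nr: "1 \<notin> set (leaves r)" "2 \<notin> set (leaves r)" using L dj by auto
    have dN: "D (Node l r) = Suc (D l)" using L by simp
    have s1: "(\<Sum>l'\<leftarrow>ins x l. g (D (Node l' r))) = (\<Sum>l'\<leftarrow>ins x l. (\<lambda>k. g (Suc k)) (D l'))"
    proof -
      have "\<And>l'. l' \<in> set (ins x l) \<Longrightarrow> g (D (Node l' r)) = (\<lambda>k. g (Suc k)) (D l')"
        using L by (auto dest!: ins_set)
      then show ?thesis by (metis (mono_tags, lifting) map_eq_conv)
    qed
    have s1': "(\<Sum>l'\<leftarrow>ins x l. (\<lambda>k. g (Suc k)) (D l')) = (4 * real (length (leaves l)) - 4 - 2 * real (D l)) * g (Suc (D l))
           + 2 * (real (D l) + 1) * g (Suc (Suc (D l)))"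
      using Node.IH(1)[of "\<lambda>k. g (Suc k)"] L dj xl by simp
    have s2: "(\<Sum>r'\<leftarrow>ins x r. g (D (Node l r'))) = (4 * real (length (leaves r)) - 2) * g (Suc (D l))"
      by (rule sum_const_ins) (use L in auto)
    show ?thesis unfolding split s1 s1' s2 dN ll by (simp add: algebra_simps)
  next
    case R
    have nl: "1 \<notin> set (leaves l)" "2 \<notin> set (leaves l)" using R dj by auto
    have dN: "D (Node l r) = Suc (D r)" using R nl by simp
    have s1: "(\<Sum>r'\<leftarrow>ins x r. g (D (Node l r'))) = (\<Sum>r'\<leftarrow>ins x r. (\<lambda>k. g (Suc k)) (D r'))"
    proof -
      have "\<And>r'. r' \<in> set (ins x r) \<Longrightarrow> g (D (Node l r')) = (\<lambda>k. g (Suc k)) (D r')"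
        using R nl by (auto dest!: ins_set)
      then show ?thesis by (metis (mono_tags, lifting) map_eq_conv)
    qed
    have s1': "(\<Sum>r'\<leftarrow>ins x r. (\<lambda>k. g (Suc k)) (D r')) = (4 * real (length (leaves r)) - 4 - 2 * real (D r)) * g (Suc (D r))
           + 2 * (real (D r) + 1) * g (Suc (Suc (D r)))"
      using Node.IH(2)[of "\<lambda>k. g (Suc k)"] R dj xl by simp
    have s2: "(\<Sum>l'\<leftarrow>ins x l. g (D (Node l' r))) = (4 * real (length (leaves l)) - 2) * g (Suc (D r))"
      by (rule sum_const_ins) (use R nl x1 in \<open>auto dest!: ins_set\<close>)
    show ?thesis unfolding split s1 s1' s2 dN ll by (simp add: algebra_simps)
  next
    case N
    have dN: "D (Node l r) = 0" using N by auto
    have s1: "(\<Sum>l'\<leftarrow>ins x l. g (D (Node l' r))) = (4 * real (length (leaves l)) - 2) * g 0"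
      by (rule sum_const_ins) (use N x1 in \<open>auto dest!: ins_set\<close>)
    have s2: "(\<Sum>r'\<leftarrow>ins x r. g (D (Node l r'))) = (4 * real (length (leaves r)) - 2) * g 0"
      by (rule sum_const_ins) (use N x1 in \<open>auto dest!: ins_set\<close>)
    show ?thesis unfolding split s1 s2 dN ll by (simp add: algebra_simps)
  qed
qed



definition Ls :: "nat \<Rightarrow> ltree set" where "Ls n = {t. labelled n t}"

lemma mset_set_Suc: "mset_set {1..Suc n} = add_mset (Suc n) (mset_set {1..n})"
proof -
  have "{1..Suc n} = insert (Suc n) {1..n}" by auto
  then show ?thesis by (simp add: mset_set.insert)
qed

lemma L_Suc: assumes "n \<ge> 1" shows "Ls (Suc n) = (\<Union>t\<in>Ls n. set (ins (Suc n) t))"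
proof (intro equalityI subsetI)
  fix t' assume "t' \<in> Ls (Suc n)"
  then have m: "mset (leaves t') = mset_set {1..Suc n}" unfolding Ls_def labelled_mset by simp
  then have s: "set (leaves t') = {1..Suc n}" by (metis finite_atLeastAtMost finite_set_mset_mset_set set_mset_mset)
  then have "1 \<in> set (leaves t')" "Suc n \<in> set (leaves t')" by auto
  then have ne: "t' \<noteq> Leaf (Suc n)" using assms by auto
  let ?t = "del (Suc n) t'"
  have i: "t' \<in> set (ins (Suc n) ?t)" using del_ins[OF \<open>Suc n \<in> set (leaves t')\<close> ne] .
  have "add_mset (Suc n) (mset (leaves ?t)) = add_mset (Suc n) (mset_set {1..n})"
    using ins_mset[OF i] m mset_set_Suc by simp
  then have "?t \<in> Ls n" unfolding Ls_def labelled_mset by simp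
  then show "t' \<in> (\<Union>t\<in>Ls n. set (ins (Suc n) t))" using i by blast
next
  fix t' assume "t' \<in> (\<Union>t\<in>Ls n. set (ins (Suc n) t))"
  then obtain t where t: "t \<in> Ls n" "t' \<in> set (ins (Suc n) t)" by blast
  then show "t' \<in> Ls (Suc n)" unfolding Ls_def labelled_mset
    using ins_mset[OF t(2)] mset_set_Suc by simp
qed

lemma Ls_leaves: "t \<in> Ls n \<Longrightarrow> distinct (leaves t) \<and> set (leaves t) = {1..n} \<and> length (leaves t) = n"
proof -
  assume "t \<in> Ls n"
  then have a: "distinct (leaves t)" "set (leaves t) = {1..n}" unfolding Ls_def labelled_def by auto
  have "length (leaves t) = card (set (leaves t))" using distinct_card[OF a(1)] by simp
  then show ?thesis using a by simp
qed

lemma L_one: "Ls 1 = {Leaf 1}"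
proof (intro equalityI subsetI)
  fix t assume a: "t \<in> Ls 1"
  show "t \<in> {Leaf 1}"
  proof (cases t)
    case (Leaf y) then show ?thesis using Ls_leaves[OF a] by auto
  next
    case (Node l r)
    have "length (leaves t) \<ge> 2" using Node len_pos[of l] len_pos[of r] by simp
    then show ?thesis using Ls_leaves[OF a] by simp
  qed
qed (simp add: Ls_def labelled_def)

lemma L_finite: "finite (Ls n)"
proof (induction n)
  case 0
  have "Ls 0 = {}" unfolding Ls_def labelled_def using leaves_ne by auto
  then show ?case by simp
next
  case (Suc n)
  show ?case
  proof (cases "n = 0")
    case True then show ?thesis using L_one by simp
  next
    case False then show ?thesis using L_Suc[of n] Suc by simp
  qed
qed

lemma notin_L: "t \<in> Ls n \<Longrightarrow> Suc n \<notin> set (leaves t)"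
  using Ls_leaves by auto

lemma L_disj: "t1 \<in> Ls n \<Longrightarrow> t2 \<in> Ls n \<Longrightarrow> t1 \<noteq> t2 \<Longrightarrow> set (ins (Suc n) t1) \<inter> set (ins (Suc n) t2) = {}"
  using ins_del[OF notin_L] by blast

lemma sum_ins_distinct: "t \<in> Ls n \<Longrightarrow> (\<Sum>t'\<in>set (ins (Suc n) t). h t') = (\<Sum>t'\<leftarrow>ins (Suc n) t. (h t' :: real))"
  using ins_distinct[OF notin_L] by (simp add: sum_list_distinct_conv_sum_set)

lemma sum_L_Suc: assumes "n \<ge> 1"
  shows "(\<Sum>t\<in>Ls (Suc n). h t) = (\<Sum>t\<in>Ls n. \<Sum>t'\<leftarrow>ins (Suc n) t. (h t' :: real))"
proof -
  have "(\<Sum>t\<in>Ls (Suc n). h t) = (\<Sum>t\<in>Ls n. \<Sum>t'\<in>set (ins (Suc n) t). h t')"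
    unfolding L_Suc[OF assms] by (rule sum.UNION_disjoint) (auto simp: L_finite L_disj)
  also have "\<dots> = (\<Sum>t\<in>Ls n. \<Sum>t'\<leftarrow>ins (Suc n) t. h t')"
    by (rule sum.cong) (auto simp: sum_ins_distinct)
  finally show ?thesis .
qed

lemma rec: assumes "n \<ge> 2"
  shows "(\<Sum>t\<in>Ls (Suc n). g (D t)) = (\<Sum>t\<in>Ls n. (4 * real n - 4 - 2 * real (D t)) * g (D t)
           + 2 * (real (D t) + 1) * (g (Suc (D t)) :: real))"
proof -
  have "(\<Sum>t\<in>Ls (Suc n). g (D t)) = (\<Sum>t\<in>Ls n. \<Sum>t'\<leftarrow>ins (Suc n) t. g (D t'))"
    using sum_L_Suc[of n] assms by simp
  also have "\<dots> = (\<Sum>t\<in>Ls n. (4 * real n - 4 - 2 * real (D t)) * g (D t)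
           + 2 * (real (D t) + 1) * (g (Suc (D t)) :: real))"
  proof (rule sum.cong)
    fix t assume "t \<in> Ls n"
    note h = Ls_leaves[OF this]
    have "1 \<in> set (leaves t)" "2 \<in> set (leaves t)" "Suc n \<notin> set (leaves t)" using h assms by auto
    then show "(\<Sum>t'\<leftarrow>ins (Suc n) t. g (D t')) = (4 * real n - 4 - 2 * real (D t)) * g (D t)
           + 2 * (real (D t) + 1) * g (Suc (D t))"
      using tree_sum[of t "Suc n" g] h by simp
  qed simp
  finally show ?thesis .
qed

lemma base: "(\<Sum>t\<in>Ls 2. g (D t)) = 2 * (g 0 :: real)"
proof -
  have "(\<Sum>t\<in>Ls 2. g (D t)) = (\<Sum>t\<in>Ls (Suc 1). g (D t))" by (simp add: numeral_2_eq_2)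
  also have "\<dots> = (\<Sum>t\<in>Ls 1. \<Sum>t'\<leftarrow>ins (Suc 1) t. g (D t'))"
    by (rule sum_L_Suc) simp
  also have "\<dots> = (\<Sum>t'\<leftarrow>ins (Suc 1) (Leaf 1). g (D t'))" unfolding L_one by simp
  also have "\<dots> = 2 * g 0" by simp
  finally show ?thesis .
qed



definition M :: "nat \<Rightarrow> nat \<Rightarrow> real" where "M j n = (\<Sum>t\<in>Ls n. real (D t) ^ j)"

lemma M0_rec: assumes "n \<ge> 2" shows "M 0 (Suc n) = (4 * real n - 2) * M 0 n"
proof -
  have "M 0 (Suc n) = (\<Sum>t\<in>Ls n. (4 * real n - 2))"
    unfolding M_def rec[OF assms, of "\<lambda>k. real k ^ 0"] by (rule sum.cong) (simp_all add: algebra_simps)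
  also have "\<dots> = (4 * real n - 2) * M 0 n" by (simp add: M_def)
  finally show ?thesis .
qed

lemma M1_rec: assumes "n \<ge> 2" shows "M 1 (Suc n) = 4 * real n * M 1 n + 2 * M 0 n"
proof -
  have "M 1 (Suc n) = (\<Sum>t\<in>Ls n. 4 * real n * real (D t) + 2)"
    unfolding M_def rec[OF assms, of "\<lambda>k. real k ^ 1"] by (rule sum.cong) (simp_all add: algebra_simps)
  also have "\<dots> = 4 * real n * M 1 n + 2 * M 0 n" by (simp add: M_def sum.distrib sum_distrib_left)
  finally show ?thesis .
qed

lemma M2_rec: assumes "n \<ge> 2" shows "M 2 (Suc n) = (4 * real n + 2) * M 2 n + 6 * M 1 n + 2 * M 0 n"
proof -
  have "M 2 (Suc n) = (\<Sum>t\<in>Ls n. (4 * real n + 2) * real (D t) ^ 2 + 6 * real (D t) + 2)"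
    unfolding M_def rec[OF assms, of "\<lambda>k. real k ^ 2"] by (rule sum.cong) (simp_all add: algebra_simps power2_eq_square)
  also have "\<dots> = (4 * real n + 2) * M 2 n + 6 * M 1 n + 2 * M 0 n" by (simp add: M_def sum.distrib sum_distrib_left)
  finally show ?thesis .
qed

lemma M_base: "M 0 2 = 2" "M 1 2 = 0" "M 2 2 = 0"
  unfolding M_def using base[of "\<lambda>k. real k ^ 0"] base[of "\<lambda>k. real k ^ 1"] base[of "\<lambda>k. real k ^ 2"] by simp_all

lemma dfact_step: "dfact (2 * Suc m + 1) = (2 * m + 3) * dfact (2 * m + 1)"
  "dfact (2 * Suc m + 2) = (2 * m + 4) * dfact (2 * m + 2)"
proof -
  have e1: "2 * Suc m + 1 = Suc (Suc (2 * m + 1))" and e2: "2 * Suc m + 2 = Suc (Suc (2 * m + 2))" by simp_all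
  have "dfact (2 * Suc m + 1) = Suc (Suc (2 * m + 1)) * dfact (2 * m + 1)"
    unfolding e1 by (rule dfact.simps(3))
  then show "dfact (2 * Suc m + 1) = (2 * m + 3) * dfact (2 * m + 1)" by (simp del: dfact.simps add: algebra_simps)
  have "dfact (2 * Suc m + 2) = Suc (Suc (2 * m + 2)) * dfact (2 * m + 2)"
    unfolding e2 by (rule dfact.simps(3))
  then show "dfact (2 * Suc m + 2) = (2 * m + 4) * dfact (2 * m + 2)" by (simp del: dfact.simps add: algebra_simps)
qed

lemma M_closed:
  "M 0 (Suc (Suc m)) = 2 ^ (m + 1) * real (dfact (2*m+1)) \<and>
   M 1 (Suc (Suc m)) = 2 ^ (m + 1) * (real (dfact (2*m+2)) / 2 - real (dfact (2*m+1))) \<and>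
   M 2 (Suc (Suc m)) = 2 ^ (m + 1) * ((4 * (real m + 2) + 1) / 3 * real (dfact (2*m+1)) - 3/2 * real (dfact (2*m+2)))"
proof (induction m)
  case 0
  have "dfact 2 = 2" by (simp add: numeral_2_eq_2)
  then show ?case using M_base by (simp add: numeral_2_eq_2)
next
  case (Suc m)
  define a where "a = real (dfact (2*m+1))"
  define b where "b = real (dfact (2*m+2))"
  define p :: real where "p = 2 ^ (m + 1)"
  have pS: "(2::real) ^ (Suc m + 1) = 2 * p" unfolding p_def by simp
  from Suc.IH have h0: "M 0 (Suc (Suc m)) = p * a" and h1: "M 1 (Suc (Suc m)) = p * (b / 2 - a)"
    and h2: "M 2 (Suc (Suc m)) = p * ((4 * (real m + 2) + 1) / 3 * a - 3/2 * b)"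
    unfolding a_def b_def p_def by blast+
  have ge: "Suc (Suc m) \<ge> 2" by simp
  have da: "real (dfact (2 * Suc m + 1)) = (2 * real m + 3) * a"
    and db: "real (dfact (2 * Suc m + 2)) = (2 * real m + 4) * b"
    unfolding a_def b_def using dfact_step[of m] by (simp_all del: dfact.simps)
  note r0 = M0_rec[OF ge] and r1 = M1_rec[OF ge] and r2 = M2_rec[OF ge]
  show ?case
    unfolding r0 r1 r2 da db h0 h1 h2 pS by (simp add: field_simps)
qed



definition cls :: "ltree \<Rightarrow> ltree set" where "cls x = {y. tiso x y}"

lemma Tn_cls: "Tn n = cls ` Ls n"
  unfolding Tn_def quotient_def Ls_def cls_def by auto

lemma cls_mem: "x \<in> Ls n \<Longrightarrow> y \<in> cls x \<Longrightarrow> y \<in> Ls n \<and> D y = D x"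
  unfolding cls_def Ls_def using tiso_labelled tiso_depth labelled_def by (metis mem_Collect_eq)

lemma cls_card: "x \<in> Ls n \<Longrightarrow> card (cls x) = 2 ^ (n - 1)"
  unfolding cls_def using card_class Ls_leaves by metis

lemma cls_eq: "cls x1 \<inter> cls x2 \<noteq> {} \<Longrightarrow> cls x1 = cls x2"
proof -
  assume "cls x1 \<inter> cls x2 \<noteq> {}"
  then obtain z where "tiso x1 z" "tiso x2 z" unfolding cls_def by auto
  then have a: "tiso x1 x2" "tiso x2 x1" using tiso_sym tiso_trans by blast+
  show ?thesis unfolding cls_def using tiso_trans a by blast
qed

lemma f_card: "2 ^ (n - 1) * f k n = card {t \<in> Ls n. D t = k}"
proof -
  let ?C = "{T \<in> Tn n. \<exists>t\<in>T. D t = k}"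
  have U: "\<Union>?C = {t \<in> Ls n. D t = k}"
  proof (intro equalityI subsetI)
    fix t assume "t \<in> \<Union>?C"
    then obtain x s where x: "x \<in> Ls n" "t \<in> cls x" "s \<in> cls x" "D s = k" unfolding Tn_cls by auto
    then show "t \<in> {t \<in> Ls n. D t = k}" using cls_mem[OF x(1)] by auto
  next
    fix t assume t: "t \<in> {t \<in> Ls n. D t = k}"
    have "t \<in> cls t" unfolding cls_def by (simp add: tiso_refl)
    then have "cls t \<in> ?C" using t unfolding Tn_cls by auto
    then show "t \<in> \<Union>?C" using \<open>t \<in> cls t\<close> by blast
  qed
  have fU: "finite (\<Union>?C)" unfolding U using L_finite by simp
  have fC: "finite ?C" by (rule finite_subset[OF _ finite_Pow_iff[THEN iffD2, OF fU]]) blast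
  have "2 ^ (n - 1) * card ?C = card (\<Union>?C)"
  proof (rule card_partition[OF fC fU])
    show "card c = 2 ^ (n - 1)" if "c \<in> ?C" for c using that unfolding Tn_cls using cls_card by auto
    show "c1 \<inter> c2 = {}" if "c1 \<in> ?C" "c2 \<in> ?C" "c1 \<noteq> c2" for c1 c2
      using that unfolding Tn_cls using cls_eq by blast
  qed
  then show ?thesis unfolding U f_def by simp
qed

theorem lemma12:
  fixes n :: nat
  assumes "n \<ge> 2"
  shows "(\<Sum>k=1..n-2. real (k^2 * f k n))
           = 1/3 * (4 * real n + 1) * real (dfact (2*n-3)) - 3/2 * real (dfact (2*n-2))"
proof -
  let ?A = "\<lambda>k. {t \<in> Ls n. D t = k}"
  have fk: "real (f k n) = real (card (?A k)) / 2 ^ (n - 1)" for k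
  proof -
    have "real (card (?A k)) = real (2 ^ (n - 1) * f k n)" unfolding f_card[symmetric] ..
    then show ?thesis by (simp add: field_simps)
  qed
  have "(\<Sum>k=1..n-2. real (k^2 * f k n)) = (\<Sum>k=0..n-2. real k ^ 2 * real (card (?A k))) / 2 ^ (n - 1)"
  proof -
    have "(\<Sum>k=0..n-2. real k ^ 2 * real (card (?A k))) = (\<Sum>k=1..n-2. real k ^ 2 * real (card (?A k)))"
      by (simp add: sum.atLeast_Suc_atMost)
    then show ?thesis by (simp add: fk sum_divide_distrib)
  qed
  also have "(\<Sum>k=0..n-2. real k ^ 2 * real (card (?A k))) = (\<Sum>k=0..n-2. \<Sum>t\<in>?A k. real (D t) ^ 2)"
    by (rule sum.cong) auto
  also have "\<dots> = M 2 n" unfolding M_def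
  proof (rule sum.group)
    show "finite (Ls n)" by (rule L_finite)
    show "finite {0..n-2}" by simp
    show "D ` Ls n \<subseteq> {0..n-2}"
    proof
      fix k assume "k \<in> D ` Ls n"
      then obtain t where t: "t \<in> Ls n" "k = D t" by auto
      note h = Ls_leaves[OF t(1)]
      have "D t + 2 \<le> length (leaves t)" using depth_bound[of t 1 2] h assms by auto
      then show "k \<in> {0..n-2}" using t h by auto
    qed
  qed
  finally have S: "(\<Sum>k=1..n-2. real (k^2 * f k n)) = M 2 n / 2 ^ (n - 1)" .
  obtain m where m: "n = Suc (Suc m)" using assms by (metis add_2_eq_Suc le_Suc_ex)
  have e1: "2*n-3 = 2*m+1" "2*n-2 = 2*m+2" "n - 1 = m + 1" using m by simp_all
  have "M 2 n = 2 ^ (m + 1) * ((4 * (real m + 2) + 1) / 3 * real (dfact (2*m+1)) - 3/2 * real (dfact (2*m+2)))"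
    using M_closed[of m] m by simp
  then show ?thesis unfolding S e1 using m by (simp add: field_simps)
qed


end
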